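(* Let $\Gamma\subset U_+$ be a non-commutative, torsion-free complex Kleinian group and let $\Gamma_p$ be the subgroup of $\Gamma$ generated by all parabolic elements of $\Gamma$. Suppose $\Gamma_p$ is conjugate in $\mathrm{PSL}(3,\mathbb{C})$ to a group $$\Gamma^\ast_W=\{g_{x,y} : (x,y)\in W\},\qquad g_{x,y}=\begin{bmatrix}1&x&y\\0&1&0\\0&0&1\end{bmatrix},$$ for some discrete additive subgroup $W\subset\mathbb{C}^2$ with $\mathrm{rank}(W)\le 2$. Then $\Gamma_p$ is conjugate to one of the following groups: (i) $\Gamma_1=\langle g_{1,0},g_{0,1}\rangle$; (ii) $\Gamma_2=\langle g_{0,1},g_{0,y}\rangle$ with $y\notin\mathbb{R}$; (iii) $\Gamma_3=\langle g_{1,0},g_{x,0}\rangle$ with $x\notin\mathbb{R}$; (iv) $\Gamma_4=\langle g_{1,0}\rangle$; (v) $\Gamma_5=\langle g_{0,1}\rangle$.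
   Context: $U_+\subset\mathrm{PSL}(3,\mathbb{C})$ is the subgroup of elements admitting an upper triangular lift in $\mathrm{SL}(3,\mathbb{C})$. A complex Kleinian group is a discrete subgroup of $\mathrm{PSL}(3,\mathbb{C})$ acting properly discontinuously on some nonempty open invariant subset of $\mathbb{CP}^2$. An element of $\mathrm{PSL}(3,\mathbb{C})$ is parabolic if it has a non-diagonalizable lift in $\mathrm{SL}(3,\mathbb{C})$ all of whose eigenvalues have modulus $1$. Torsion-free means the only element of finite order is the identity. *)

theory Defs
  imports "HOL-Analysis.Analysis"
begin

text \<open>An element of PSL(3,C) is represented by any of its lifts in SL(3,C)
(3x3 complex matrices of determinant 1); a subgroup of PSL(3,C) is represented by its full
preimage in SL(3,C), i.e. a subgroup of SL(3,C) containing the centre (the scalar matrices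
with cube roots of unity). Indices of 3x3 matrices are 0,1,2 (row index first).
A point of CP^2 is a complex line in C^3; an open set of CP^2 is represented by its
preimage cone in C^3 minus the origin.\<close>

type_synonym cmat = "complex^3^3"
type_synonym cvec = "complex^3"

definition SL3 :: "cmat set" where
  "SL3 = {A. det A = 1}"

definition centre3 :: "cmat set" where
  "centre3 = {mat w | w. w ^ 3 = (1::complex)}"

fun mpow :: "cmat \<Rightarrow> nat \<Rightarrow> cmat" where
  "mpow A 0 = mat 1"
| "mpow A (Suc n) = A ** mpow A n"

definition psl_subgroup :: "cmat set \<Rightarrow> bool" where
  "psl_subgroup G \<longleftrightarrow> G \<subseteq> SL3 \<and> centre3 \<subseteq> G \<and>
     (\<forall>A\<in>G. \<forall>B\<in>G. A ** B \<in> G) \<and> (\<forall>A\<in>G. matrix_inv A \<in> G)"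

inductive_set psl_gen :: "cmat set \<Rightarrow> cmat set" for S where
  centre: "C \<in> centre3 \<Longrightarrow> C \<in> psl_gen S"
| gen: "A \<in> S \<Longrightarrow> A \<in> psl_gen S"
| mult: "A \<in> psl_gen S \<Longrightarrow> B \<in> psl_gen S \<Longrightarrow> A ** B \<in> psl_gen S"
| inv: "A \<in> psl_gen S \<Longrightarrow> matrix_inv A \<in> psl_gen S"

definition upper_tri :: "cmat \<Rightarrow> bool" where
  "upper_tri A \<longleftrightarrow> A$1$0 = 0 \<and> A$2$0 = 0 \<and> A$2$1 = 0"

text \<open>Gamma is contained in U_+: every element has an upper triangular lift in SL(3,C)
(equivalently every lift is upper triangular, since lifts differ by scalars).\<close>
definition in_Uplus :: "cmat set \<Rightarrow> bool" where
  "in_Uplus G \<longleftrightarrow> (\<forall>A\<in>G. \<exists>w::complex. w ^ 3 = 1 \<and> upper_tri (mat w ** A))"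

definition discrete_mats :: "cmat set \<Rightarrow> bool" where
  "discrete_mats G \<longleftrightarrow> (\<forall>A\<in>G. \<exists>e>0. \<forall>B\<in>G. dist B A < e \<longrightarrow> B = A)"

definition proj_open_cone :: "cvec set \<Rightarrow> bool" where
  "proj_open_cone Om \<longleftrightarrow> open Om \<and> 0 \<notin> Om \<and>
     (\<forall>x\<in>Om. \<forall>c::complex. c \<noteq> 0 \<longrightarrow> c *s x \<in> Om)"

definition invariant_cone :: "cmat set \<Rightarrow> cvec set \<Rightarrow> bool" where
  "invariant_cone G Om \<longleftrightarrow> (\<forall>A\<in>G. \<forall>x\<in>Om. A *v x \<in> Om)"

text \<open>Proper discontinuity on the projectivisation of Om: for each compact set (the images
in CP^2 of compact subsets of the cone are exactly the compact subsets of the projective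
open set) only finitely many group elements move it to meet itself.\<close>
definition prop_disc :: "cmat set \<Rightarrow> cvec set \<Rightarrow> bool" where
  "prop_disc G Om \<longleftrightarrow> (\<forall>K. compact K \<and> K \<subseteq> Om \<longrightarrow>
     finite {A\<in>G. \<exists>x\<in>K. \<exists>y\<in>K. \<exists>c::complex. A *v x = c *s y})"

definition complex_kleinian :: "cmat set \<Rightarrow> bool" where
  "complex_kleinian G \<longleftrightarrow> psl_subgroup G \<and> discrete_mats G \<and>
     (\<exists>Om. Om \<noteq> {} \<and> proj_open_cone Om \<and> invariant_cone G Om \<and> prop_disc G Om)"

definition noncommutative_psl :: "cmat set \<Rightarrow> bool" where
  "noncommutative_psl G \<longleftrightarrow> (\<exists>A\<in>G. \<exists>B\<in>G. \<forall>w::complex. w ^ 3 = 1 \<longrightarrow> A ** B \<noteq> mat w ** (B ** A))"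

definition torsion_free_psl :: "cmat set \<Rightarrow> bool" where
  "torsion_free_psl G \<longleftrightarrow> (\<forall>A\<in>G. \<forall>n>0. mpow A n \<in> centre3 \<longrightarrow> A \<in> centre3)"

definition diagonalizable3 :: "cmat \<Rightarrow> bool" where
  "diagonalizable3 A \<longleftrightarrow> (\<exists>P D :: cmat. invertible P \<and> (\<forall>i j. i \<noteq> j \<longrightarrow> D$i$j = 0) \<and>
     A = P ** D ** matrix_inv P)"

definition eigenvalue3 :: "cmat \<Rightarrow> complex \<Rightarrow> bool" where
  "eigenvalue3 A c \<longleftrightarrow> (\<exists>v. v \<noteq> 0 \<and> A *v v = c *s v)"

definition parabolic :: "cmat \<Rightarrow> bool" where
  "parabolic A \<longleftrightarrow> (\<exists>w::complex. w ^ 3 = 1 \<and> \<not> diagonalizable3 (mat w ** A) \<and>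
     (\<forall>c. eigenvalue3 (mat w ** A) c \<longrightarrow> norm c = 1))"

definition parabolic_subgroup :: "cmat set \<Rightarrow> cmat set" where
  "parabolic_subgroup G = psl_gen {A\<in>G. parabolic A}"

definition conjugate_psl :: "cmat set \<Rightarrow> cmat set \<Rightarrow> bool" where
  "conjugate_psl G H \<longleftrightarrow> (\<exists>P\<in>SL3. G = (\<lambda>A. P ** A ** matrix_inv P) ` H)"

definition gxy :: "complex \<Rightarrow> complex \<Rightarrow> cmat" where
  "gxy x y = (\<chi> i j. if i = j then 1 else if i = 0 \<and> j = 1 then x
                 else if i = 0 \<and> j = 2 then y else 0)"

definition Gamma_W :: "(complex \<times> complex) set \<Rightarrow> cmat set" where
  "Gamma_W W = {mat w ** gxy x y | w x y. w ^ 3 = 1 \<and> (x, y) \<in> W}"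

definition discrete_add_subgroup :: "(complex \<times> complex) set \<Rightarrow> bool" where
  "discrete_add_subgroup W \<longleftrightarrow> 0 \<in> W \<and> (\<forall>a\<in>W. \<forall>b\<in>W. a + b \<in> W) \<and> (\<forall>a\<in>W. - a \<in> W) \<and>
     (\<forall>a\<in>W. \<exists>e>0. \<forall>b\<in>W. dist b a < e \<longrightarrow> b = a)"

text \<open>A discrete subgroup of C^2 is free abelian; rank at most 2 means generated by two elements.\<close>
definition rank_le_2 :: "(complex \<times> complex) set \<Rightarrow> bool" where
  "rank_le_2 W \<longleftrightarrow> (\<exists>a b. W = {of_int m *\<^sub>R a + of_int n *\<^sub>R b | m n :: int. True})"

end

theory Submission imports Defs begin

lemma three_eq_0: "(3::3) = 0" by simp

lemma UNIV3: "(UNIV::3 set) = {0,1,2}"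
proof (rule UNIV_eq_I)
  fix x :: 3
  show "x \<in> {0,1,2}" using exhaust_3[of x] three_eq_0 by auto
qed

lemma sum3: "sum f (UNIV::3 set) = f 0 + f 1 + f 2"
  unfolding UNIV3 by (simp add: ac_simps)

lemma all3: "(\<forall>i::3. P i) \<longleftrightarrow> P 0 \<and> P 1 \<and> P 2"
  by (metis UNIV3 UNIV_I insertE singletonD)

lemma neq3[simp]: "(0::3) \<noteq> 1" "(0::3) \<noteq> 2" "(1::3) \<noteq> 2" "(1::3) \<noteq> 0" "(2::3) \<noteq> 0" "(2::3) \<noteq> 1"
  by simp_all

lemma mat_eq3: "(A::cmat) = B \<longleftrightarrow> (\<forall>i j. A$i$j = B$i$j)"
  by (simp add: vec_eq_iff)

lemma mmult_entry: "((A::cmat) ** B)$i$j = A$i$0 * B$0$j + A$i$1 * B$1$j + A$i$2 * B$2$j"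
  by (simp add: matrix_matrix_mult_def sum3)

lemma gxy_entries:
  "gxy x y $0$0 = 1" "gxy x y $0$1 = x" "gxy x y $0$2 = y"
  "gxy x y $1$0 = 0" "gxy x y $1$1 = 1" "gxy x y $1$2 = 0"
  "gxy x y $2$0 = 0" "gxy x y $2$1 = 0" "gxy x y $2$2 = 1"
  by (simp_all add: gxy_def)

lemma mat_entries: "(mat w :: cmat) $i$j = (if i = j then w else 0)"
  by (simp add: mat_def)

lemma gxy_mult: "gxy x y ** gxy x' y' = gxy (x+x') (y+y')"
  unfolding mat_eq3 all3 mmult_entry gxy_entries by simp

lemma inv_props: assumes "invertible (A::cmat)"
  shows "A ** matrix_inv A = mat 1" "matrix_inv A ** A = mat 1"
proof -
  have "\<exists>A'. A ** A' = mat 1 \<and> A' ** A = mat 1" using assms by (simp add: invertible_def)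
  then have "A ** matrix_inv A = mat 1 \<and> matrix_inv A ** A = mat 1"
    unfolding matrix_inv_def by (rule someI_ex)
  then show "A ** matrix_inv A = mat 1" "matrix_inv A ** A = mat 1" by auto
qed

lemma inv_unique: assumes "(A::cmat) ** B = mat 1" "B ** A = mat 1"
  shows "matrix_inv A = B"
proof -
  have inv: "invertible A" using assms by (auto simp: invertible_def)
  have "matrix_inv A = matrix_inv A ** (A ** B)" using assms by simp
  also have "\<dots> = (matrix_inv A ** A) ** B" by (simp add: matrix_mul_assoc)
  also have "\<dots> = B" using inv_props[OF inv] by simp
  finally show ?thesis .
qed

lemma SL3_inv: "A \<in> SL3 \<Longrightarrow> invertible A"
  by (simp add: SL3_def invertible_det_nz)

lemma mat_comm: "mat w ** (A::cmat) = A ** mat w"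
  unfolding mat_eq3 all3 mmult_entry mat_entries by (simp add: mult.commute)

lemma mat_mat: "mat a ** (mat b :: cmat) = mat (a*b)"
  unfolding mat_eq3 all3 mmult_entry mat_entries by simp

lemma mat_mult_left: "mat a ** (mat b ** (A :: cmat)) = mat (a*b) ** A"
  by (simp add: matrix_mul_assoc mat_mat)

lemma gxy_00: "gxy 0 0 = mat 1"
  unfolding mat_eq3 all3 mat_entries gxy_entries by simp

lemma gxy_inv: "matrix_inv (gxy x y) = gxy (-x) (-y)"
  by (rule inv_unique) (simp_all add: gxy_mult gxy_00)

lemma det_mat: "det (mat w :: cmat) = w^3"
  unfolding det_3 three_eq_0 mat_entries by (simp add: power3_eq_cube)

lemma det_gxy: "det (gxy x y) = 1"
  unfolding det_3 three_eq_0 gxy_entries by simp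

lemma mat_inv: "(w::complex) \<noteq> 0 \<Longrightarrow> matrix_inv (mat w :: cmat) = mat (1/w)"
  by (rule inv_unique) (simp_all add: mat_mat)

definition lat :: "complex \<times> complex \<Rightarrow> complex \<times> complex \<Rightarrow> (complex \<times> complex) set" where
  "lat a b = {of_int m *\<^sub>R a + of_int n *\<^sub>R b | m n :: int. True}"

definition gp :: "complex \<times> complex \<Rightarrow> cmat" where
  "gp u = gxy (fst u) (snd u)"

lemma gp_add: "gp u ** gp v = gp (u + v)"
  by (simp add: gp_def gxy_mult)

lemma gp_0: "gp 0 = mat 1"
  by (simp add: gp_def gxy_00)

lemma gp_inv: "matrix_inv (gp u) = gp (- u)"
  by (simp add: gp_def gxy_inv)

lemma Gamma_W_gp: "Gamma_W W = {mat w ** gp u | w u. w ^ 3 = 1 \<and> u \<in> W}"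
  unfolding Gamma_W_def gp_def by force

lemma one_centre: "mat 1 \<in> centre3"
  unfolding centre3_def by force

lemma gp_pow_nat: assumes "gp u \<in> psl_gen S" shows "gp (of_nat k *\<^sub>R u) \<in> psl_gen S"
proof (induction k)
  case 0
  then show ?case using gp_0 one_centre psl_gen.centre by simp
next
  case (Suc k)
  have "gp u ** gp (of_nat k *\<^sub>R u) \<in> psl_gen S" using assms Suc psl_gen.mult by blast
  moreover have "u + of_nat k *\<^sub>R u = of_nat (Suc k) *\<^sub>R u" by (simp add: algebra_simps)
  ultimately show ?case by (simp add: gp_add)
qed

lemma gp_pow_int: assumes "gp u \<in> psl_gen S" shows "gp (of_int k *\<^sub>R u) \<in> psl_gen S"
proof (cases "k \<ge> 0")
  case True
  then obtain n where "k = int n" by (metis nonneg_eq_int)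
  then show ?thesis using gp_pow_nat[OF assms, of n] by simp
next
  case False
  then have "- k \<ge> 0" by simp
  then obtain n where "- k = int n" by (metis nonneg_eq_int)
  then have n: "k = - int n" by simp
  have "matrix_inv (gp (of_nat n *\<^sub>R u)) \<in> psl_gen S" using gp_pow_nat[OF assms, of n] psl_gen.inv by blast
  then show ?thesis using n by (simp add: gp_inv)
qed

lemma gen_sub: "psl_gen {gp a, gp b} \<subseteq> Gamma_W (lat a b)"
proof
  fix A assume "A \<in> psl_gen {gp a, gp b}"
  then show "A \<in> Gamma_W (lat a b)"
  proof (induction rule: psl_gen.induct)
    case (centre C)
    then obtain w where w: "C = mat w" "w^3 = 1" unfolding centre3_def by auto
    have "(0::complex\<times>complex) \<in> lat a b" unfolding lat_def by (rule CollectI, rule exI[of _ 0], rule exI[of _ 0]) simp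
    moreover have "C = mat w ** gp 0" using w gp_0 by simp
    ultimately show ?case unfolding Gamma_W_gp using w by blast
  next
    case (gen A)
    have "a \<in> lat a b" unfolding lat_def by (rule CollectI, rule exI[of _ 1], rule exI[of _ 0]) simp
    moreover have "b \<in> lat a b" unfolding lat_def by (rule CollectI, rule exI[of _ 0], rule exI[of _ 1]) simp
    moreover have "gp a = mat 1 ** gp a" "gp b = mat 1 ** gp b" by simp_all
    moreover have "(1::complex)^3 = 1" by simp
    ultimately show ?case using gen unfolding Gamma_W_gp by blast
  next
    case (mult A B)
    then obtain w u w' v where A: "A = mat w ** gp u" "w^3 = 1" "u \<in> lat a b"
      and B: "B = mat w' ** gp v" "w'^3 = 1" "v \<in> lat a b" unfolding Gamma_W_gp by auto
    have "A ** B = mat (w*w') ** gp (u+v)"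
    proof -
      have "A ** B = mat w ** ((gp u ** mat w') ** gp v)" using A B by (simp add: matrix_mul_assoc)
      also have "\<dots> = mat w ** (mat w' ** (gp u ** gp v))" by (simp only: mat_comm[of w' "gp u", symmetric] matrix_mul_assoc)
      also have "\<dots> = mat (w*w') ** gp (u+v)" by (simp add: mat_mult_left gp_add)
      finally show ?thesis .
    qed
    moreover have "(w*w')^3 = 1" using A B by (simp add: power_mult_distrib)
    moreover have "u + v \<in> lat a b"
    proof -
      obtain m n m' n' where "u = of_int m *\<^sub>R a + of_int n *\<^sub>R b" "v = of_int m' *\<^sub>R a + of_int n' *\<^sub>R b"
        using A B unfolding lat_def by auto
      then have "u + v = of_int (m+m') *\<^sub>R a + of_int (n+n') *\<^sub>R b" by (simp add: algebra_simps)
      then show ?thesis unfolding lat_def by blast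
    qed
    ultimately show ?case unfolding Gamma_W_gp by blast
  next
    case (inv A)
    then obtain w u where A: "A = mat w ** gp u" "w^3 = 1" "u \<in> lat a b" unfolding Gamma_W_gp by auto
    have w0: "w \<noteq> 0" using A by auto
    have "matrix_inv A = mat (1/w) ** gp (-u)"
    proof (rule inv_unique)
      have "A ** (mat (1/w) ** gp (-u)) = mat w ** ((gp u ** mat (1/w)) ** gp (-u))"
        using A by (simp add: matrix_mul_assoc)
      also have "\<dots> = mat w ** (mat (1/w) ** (gp u ** gp (-u)))" by (simp only: mat_comm[of "1/w" "gp u", symmetric] matrix_mul_assoc)
      also have "\<dots> = mat (w * (1/w)) ** (gp u ** gp (-u))" by (simp only: mat_mult_left)
      finally have "A ** (mat (1/w) ** gp (-u)) = mat (w * (1/w)) ** (gp u ** gp (-u))" .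
      then show "A ** (mat (1/w) ** gp (-u)) = mat 1" using w0 by (simp add: gp_add gp_0)
      have "(mat (1/w) ** gp (-u)) ** A = mat (1/w) ** ((gp (-u) ** mat w) ** gp u)"
        using A by (simp add: matrix_mul_assoc)
      also have "\<dots> = mat (1/w) ** (mat w ** (gp (-u) ** gp u))" by (simp only: mat_comm[of w "gp (-u)", symmetric] matrix_mul_assoc)
      also have "\<dots> = mat ((1/w) * w) ** (gp (-u) ** gp u)" by (simp only: mat_mult_left)
      finally have "(mat (1/w) ** gp (-u)) ** A = mat ((1/w) * w) ** (gp (-u) ** gp u)" .
      then show "(mat (1/w) ** gp (-u)) ** A = mat 1" using w0 by (simp add: gp_add gp_0)
    qed
    moreover have "(1/w)^3 = 1" using A by (simp add: power_divide)
    moreover have "- u \<in> lat a b"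
    proof -
      obtain m n where "u = of_int m *\<^sub>R a + of_int n *\<^sub>R b"
        using A unfolding lat_def by auto
      then have "- u = of_int (-m) *\<^sub>R a + of_int (-n) *\<^sub>R b" by (simp add: algebra_simps)
      then show ?thesis unfolding lat_def by blast
    qed
    ultimately show ?case unfolding Gamma_W_gp by blast
  qed
qed

lemma sub_gen: "Gamma_W (lat a b) \<subseteq> psl_gen {gp a, gp b}"
proof
  fix A assume "A \<in> Gamma_W (lat a b)"
  then obtain w m n where A: "A = mat w ** gp (of_int m *\<^sub>R a + of_int n *\<^sub>R b)" "w^3 = 1"
    unfolding Gamma_W_gp lat_def by auto
  have "gp a \<in> psl_gen {gp a, gp b}" "gp b \<in> psl_gen {gp a, gp b}" by (auto intro: psl_gen.gen)
  then have "gp (of_int m *\<^sub>R a) \<in> psl_gen {gp a, gp b}" "gp (of_int n *\<^sub>R b) \<in> psl_gen {gp a, gp b}"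
    by (auto intro: gp_pow_int)
  moreover have "mat w \<in> centre3" using A unfolding centre3_def by blast
  then have "mat w \<in> psl_gen {gp a, gp b}" by (rule psl_gen.centre)
  ultimately have "mat w ** (gp (of_int m *\<^sub>R a) ** gp (of_int n *\<^sub>R b)) \<in> psl_gen {gp a, gp b}"
    by (auto intro: psl_gen.mult)
  then show "A \<in> psl_gen {gp a, gp b}" using A by (simp add: gp_add)
qed

lemma gen_eq: "psl_gen {gp a, gp b} = Gamma_W (lat a b)"
  using gen_sub sub_gen by blast

definition lin :: "complex \<times> complex \<Rightarrow> complex \<times> complex \<Rightarrow> complex \<times> complex \<Rightarrow> complex \<times> complex" where
  "lin a d u = (fst u * fst a + snd u * fst d, fst u * snd a + snd u * snd d)"

lemma lin_comb: "lin a d (r *\<^sub>R u + s *\<^sub>R v) = r *\<^sub>R lin a d u + s *\<^sub>R lin a d v"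
  by (simp add: lin_def scaleR_conv_of_real algebra_simps)

lemma lat_alt: "lat a b = range (\<lambda>p. of_int (fst p) *\<^sub>R a + of_int (snd p) *\<^sub>R b)"
proof (intro set_eqI iffI)
  fix x assume "x \<in> lat a b"
  then obtain m n where "x = of_int m *\<^sub>R a + of_int n *\<^sub>R b" unfolding lat_def by auto
  then show "x \<in> range (\<lambda>p. of_int (fst p) *\<^sub>R a + of_int (snd p) *\<^sub>R b)"
    by (intro image_eqI[where x="(m,n)"]) auto
qed (auto simp: lat_def)

lemma lin_lat: "lin a d ` lat e f = lat (lin a d e) (lin a d f)"
  unfolding lat_alt image_image lin_comb by simp

lemma cube_root: "\<exists>l::complex. l^3 = z"
proof (cases "z = 0")
  case True then show ?thesis by auto
next
  case False
  have "exp (of_nat 3 * (Ln z / 3)) = (exp (Ln z / 3))^3" by (rule exp_of_nat_mult)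
  then have "(exp (Ln z / 3))^3 = exp (3 * (Ln z / 3))" by simp
  also have "\<dots> = z" using False by simp
  finally show ?thesis by blast
qed

lemma exists_Q:
  assumes "fst a * snd d - snd a * fst d \<noteq> 0"
  shows "\<exists>Q\<in>SL3. \<forall>u. Q ** gp u ** matrix_inv Q = gp (lin a d u)"
proof -
  obtain a1 a2 d1 d2 where ad: "a = (a1,a2)" "d = (d1,d2)" by (cases a, cases d) auto
  define dl where "dl = a1 * d2 - a2 * d1"
  have dl0: "dl \<noteq> 0" using assms ad dl_def by simp
  obtain l where l: "l^3 = dl" using cube_root by blast
  have l0: "l \<noteq> 0" using l dl0 by auto
  define mu where "mu = l / dl"
  define Q :: cmat where "Q = (\<chi> i j. if i = 0 \<and> j = 0 then l else if i = 1 \<and> j = 1 then mu * d2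
     else if i = 1 \<and> j = 2 then - mu * a2 else if i = 2 \<and> j = 1 then - mu * d1
     else if i = 2 \<and> j = 2 then mu * a1 else 0)"
  have Qe: "Q$0$0 = l" "Q$0$1 = 0" "Q$0$2 = 0" "Q$1$0 = 0" "Q$1$1 = mu * d2" "Q$1$2 = - mu * a2"
     "Q$2$0 = 0" "Q$2$1 = - mu * d1" "Q$2$2 = mu * a1" by (simp_all add: Q_def)
  have "det Q = l * mu^2 * dl"
    unfolding det_3 three_eq_0 Qe dl_def by (simp add: algebra_simps power2_eq_square)
  also have "\<dots> = 1" using l dl0 unfolding mu_def by (simp add: power2_eq_square power3_eq_cube field_simps)
  finally have dQ: "Q \<in> SL3" by (simp add: SL3_def)
  have comm: "Q ** gp u = gp (lin a d u) ** Q" for u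
  proof -
    obtain x y where u: "u = (x,y)" by (cases u)
    have "l = mu * dl" using dl0 unfolding mu_def by simp
    then have leq: "l = mu * a1 * d2 - mu * a2 * d1" unfolding dl_def by (simp add: algebra_simps)
    show ?thesis
      unfolding mat_eq3 all3 mmult_entry gp_def u ad lin_def by (simp add: gxy_entries Qe leq algebra_simps)
  qed
  have "Q ** gp u ** matrix_inv Q = gp (lin a d u)" for u
  proof -
    have "Q ** gp u ** matrix_inv Q = gp (lin a d u) ** Q ** matrix_inv Q" using comm[of u] by simp
    also have "\<dots> = gp (lin a d u) ** (Q ** matrix_inv Q)" by (simp only: matrix_mul_assoc)
    also have "\<dots> = gp (lin a d u)" using inv_props[OF SL3_inv[OF dQ]] by simp
    finally show ?thesis .
  qed
  then show ?thesis using dQ by blast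
qed

lemma mat_pull: "(X::cmat) ** (mat w ** Y) = mat w ** (X ** Y)"
proof -
  have "X ** (mat w ** Y) = (X ** mat w) ** Y" by (simp only: matrix_mul_assoc)
  also have "\<dots> = (mat w ** X) ** Y" by (simp only: mat_comm[of w X, symmetric])
  also have "\<dots> = mat w ** (X ** Y)" by (simp only: matrix_mul_assoc)
  finally show ?thesis .
qed

lemma conj_mat: "(Q::cmat) ** (mat w ** A) ** R = mat w ** (Q ** A ** R)"
  by (simp only: matrix_mul_assoc mat_comm[of w Q, symmetric])

lemma conj_GW:
  assumes "\<forall>u. Q ** gp u ** matrix_inv Q = gp (f u)"
  shows "(\<lambda>A. Q ** A ** matrix_inv Q) ` Gamma_W V = Gamma_W (f ` V)"
proof (intro set_eqI iffI)
  fix x assume "x \<in> (\<lambda>A. Q ** A ** matrix_inv Q) ` Gamma_W V"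
  then obtain w u where x: "x = Q ** (mat w ** gp u) ** matrix_inv Q" "w^3 = 1" "u \<in> V"
    unfolding Gamma_W_gp by auto
  then have "x = mat w ** gp (f u)" using assms by (simp add: conj_mat)
  then show "x \<in> Gamma_W (f ` V)" unfolding Gamma_W_gp using x by blast
next
  fix x assume "x \<in> Gamma_W (f ` V)"
  then obtain w u where x: "x = mat w ** gp (f u)" "w^3 = 1" "u \<in> V"
    unfolding Gamma_W_gp by auto
  then have "x = Q ** (mat w ** gp u) ** matrix_inv Q" using assms by (simp only: conj_mat)
  moreover have "mat w ** gp u \<in> Gamma_W V" unfolding Gamma_W_gp using x by blast
  ultimately show "x \<in> (\<lambda>A. Q ** A ** matrix_inv Q) ` Gamma_W V" by blast
qed

lemma SL3_mult: "P \<in> SL3 \<Longrightarrow> Q \<in> SL3 \<Longrightarrow> P ** Q \<in> SL3"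
  by (simp add: SL3_def det_mul)

lemma inv_mult: "P \<in> SL3 \<Longrightarrow> Q \<in> SL3 \<Longrightarrow> matrix_inv (P ** Q) = matrix_inv Q ** matrix_inv P"
proof (rule inv_unique)
  assume P: "P \<in> SL3" and Q: "Q \<in> SL3"
  note p = inv_props[OF SL3_inv[OF P]] and q = inv_props[OF SL3_inv[OF Q]]
  have "P ** Q ** (matrix_inv Q ** matrix_inv P) = P ** (Q ** matrix_inv Q) ** matrix_inv P"
    by (simp add: matrix_mul_assoc)
  then show "P ** Q ** (matrix_inv Q ** matrix_inv P) = mat 1" using p q by simp
  have "matrix_inv Q ** matrix_inv P ** (P ** Q) = matrix_inv Q ** (matrix_inv P ** P) ** Q"
    by (simp add: matrix_mul_assoc)
  then show "matrix_inv Q ** matrix_inv P ** (P ** Q) = mat 1" using p q by simp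
qed

lemma conj_trans:
  assumes "conjugate_psl H (Gamma_W W)" "Q \<in> SL3" "\<forall>u. Q ** gp u ** matrix_inv Q = gp (f u)"
    "f ` V = W"
  shows "conjugate_psl H (Gamma_W V)"
proof -
  obtain P where P: "P \<in> SL3" "H = (\<lambda>A. P ** A ** matrix_inv P) ` Gamma_W W"
    using assms(1) unfolding conjugate_psl_def by blast
  have "Gamma_W W = (\<lambda>A. Q ** A ** matrix_inv Q) ` Gamma_W V"
    using conj_GW[OF assms(3)] assms(4) by simp
  then have "H = (\<lambda>A. P ** (Q ** A ** matrix_inv Q) ** matrix_inv P) ` Gamma_W V"
    using P by (simp only: image_image)
  also have "\<dots> = (\<lambda>A. (P ** Q) ** A ** matrix_inv (P ** Q)) ` Gamma_W V"
    unfolding inv_mult[OF P(1) assms(2)] by (simp only: matrix_mul_assoc)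
  finally have "H = (\<lambda>A. (P ** Q) ** A ** matrix_inv (P ** Q)) ` Gamma_W V" .
  then show ?thesis unfolding conjugate_psl_def using SL3_mult[OF P(1) assms(2)] by blast
qed

lemma real_cyclic:
  fixes S :: "real set"
  assumes S0: "0 \<in> S" and Sd: "\<forall>x\<in>S. \<forall>y\<in>S. x - y \<in> S" and e: "e > 0"
    and sep: "\<forall>x\<in>S. x \<noteq> 0 \<longrightarrow> e \<le> \<bar>x\<bar>" and S1: "1 \<in> S"
  shows "\<exists>s. s \<noteq> 0 \<and> S = {of_int k * s | k. True}"
proof -
  have Sn: "-x \<in> S" if "x \<in> S" for x using Sd S0 that by (metis diff_0)
  have Sa: "x + y \<in> S" if "x \<in> S" "y \<in> S" for x y using Sd Sn that by (metis diff_minus_eq_add)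
  have Snat: "of_nat k * x \<in> S" if "x \<in> S" for x k
    by (induction k) (auto simp: S0 distrib_right intro!: Sa that)
  have Sint: "of_int k * x \<in> S" if "x \<in> S" for x k
  proof (cases "k \<ge> 0")
    case True
    then obtain n where "k = int n" by (metis nonneg_eq_int)
    then show ?thesis using Snat[OF that, of n] by simp
  next
    case False
    then have "- k \<ge> 0" by simp
  then obtain n where "- k = int n" by (metis nonneg_eq_int)
  then have n: "k = - int n" by simp
    then show ?thesis using Sn[OF Snat[OF that, of n]] by simp
  qed
  define P where "P = {x\<in>S. 0 < x}"
  have Pne: "P \<noteq> {}" using S1 P_def by auto
  have Pbdd: "bdd_below P" unfolding P_def by (rule bdd_belowI[of _ 0]) auto
  define s where "s = Inf P"
  have Pe: "e \<le> x" if "x \<in> P" for x using sep that unfolding P_def by auto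
  have se: "e \<le> s" unfolding s_def using Pne Pe by (intro cInf_greatest) auto
  have slow: "s \<le> x" if "x \<in> P" for x unfolding s_def using that Pbdd by (rule cInf_lower)
  have sS: "s \<in> S"
  proof (rule ccontr)
    assume ns: "s \<notin> S"
    have "Inf P < s + e" using e s_def by simp
    then obtain y where y: "y \<in> P" "y < s + e" using cInf_less_iff[OF Pne Pbdd] by blast
    have "y \<noteq> s" using y ns P_def by auto
    then have sy: "s < y" using slow[OF y(1)] by simp
    then have "Inf P < y" using s_def by simp
    then obtain x where x: "x \<in> P" "x < y" using cInf_less_iff[OF Pne Pbdd] by blast
    have "s \<le> x" using slow[OF x(1)] .
    have "y - x \<in> S" using x y Sd P_def by auto
    moreover have "y - x \<noteq> 0" "\<bar>y - x\<bar> < e" using x y \<open>s \<le> x\<close> by auto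
    ultimately show False using sep by force
  qed
  have spos: "s > 0" using se e by simp
  have Seq: "S = {of_int k * s | k. True}"
  proof
    show "{of_int k * s | k. True} \<subseteq> S" using Sint[OF sS] by auto
    show "S \<subseteq> {of_int k * s | k. True}"
    proof
      fix x assume x: "x \<in> S"
      define k where "k = floor (x / s)"
      have k1: "of_int k \<le> x / s" "x / s < of_int k + 1" unfolding k_def by linarith+
      have r0: "0 \<le> x - of_int k * s" using k1(1) spos by (simp add: field_simps)
      have r1: "x - of_int k * s < s" using k1(2) spos by (simp add: field_simps)
      have rS: "x - of_int k * s \<in> S" using Sd x Sint[OF sS, of k] by blast
      have "x - of_int k * s = 0"
      proof (rule ccontr)
        assume "x - of_int k * s \<noteq> 0"
        then have "x - of_int k * s \<in> P" using r0 rS P_def by auto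
        then show False using slow r1 by fastforce
      qed
      then show "x \<in> {of_int k * s | k. True}" by auto
    qed
  qed
  show ?thesis using Seq spos by (intro exI[of _ s]) simp
qed

lemma tri_mult: assumes "upper_tri A" "upper_tri B"
  shows "upper_tri (A ** B) \<and> (A**B)$0$0 = A$0$0 * B$0$0 \<and> (A**B)$1$1 = A$1$1 * B$1$1
     \<and> (A**B)$2$2 = A$2$2 * B$2$2"
  using assms unfolding upper_tri_def mmult_entry by simp

lemma det_tri: "upper_tri U \<Longrightarrow> det U = U$0$0 * U$1$1 * U$2$2"
  unfolding det_3 three_eq_0 upper_tri_def by simp

lemma tri_inv: assumes "upper_tri U" "det U = 1"
  shows "upper_tri (matrix_inv U) \<and> matrix_inv U$0$0 * U$0$0 = 1 \<and> matrix_inv U$1$1 * U$1$1 = 1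
     \<and> matrix_inv U$2$2 * U$2$2 = 1"
proof -
  have inv: "invertible U" using assms(2) by (simp add: invertible_det_nz)
  define V where "V = matrix_inv U"
  have VU: "V ** U = mat 1" using inv_props[OF inv] V_def by simp
  have d: "U$0$0 * U$1$1 * U$2$2 = 1" using det_tri assms by simp
  then have nz: "U$0$0 \<noteq> 0" "U$1$1 \<noteq> 0" "U$2$2 \<noteq> 0" by auto
  have e: "(V ** U)$i$j = (mat 1 :: cmat)$i$j" for i j using VU by simp
  have u: "U$1$0 = 0" "U$2$0 = 0" "U$2$1 = 0" using assms(1) upper_tri_def by auto
  have e10: "V$1$0 * U$0$0 = 0" using e[of 1 0] u unfolding mmult_entry mat_entries by simp
  have e20: "V$2$0 * U$0$0 = 0" using e[of 2 0] u unfolding mmult_entry mat_entries by simp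
  have v10: "V$1$0 = 0" "V$2$0 = 0" using e10 e20 nz by auto
  have e21: "V$2$1 * U$1$1 = 0" using e[of 2 1] u v10 unfolding mmult_entry mat_entries by simp
  have v21: "V$2$1 = 0" using e21 nz by auto
  have d0: "V$0$0 * U$0$0 = 1" using e[of 0 0] u unfolding mmult_entry mat_entries by simp
  have d1: "V$1$1 * U$1$1 = 1" using e[of 1 1] u v10 unfolding mmult_entry mat_entries by simp
  have d2: "V$2$2 * U$2$2 = 1" using e[of 2 2] u v10 v21 unfolding mmult_entry mat_entries by simp
  show ?thesis using v10 v21 d0 d1 d2 unfolding V_def upper_tri_def by simp
qed

lemma unip_eig:
  assumes "upper_tri C" "C$0$0 = 1" "C$1$1 = 1" "C$2$2 = 1" "C *v v = c *s v" "v \<noteq> 0"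
  shows "c = 1"
proof (rule ccontr)
  assume c: "c \<noteq> 1"
  have e: "(C *v v)$i = (c *s v)$i" for i using assms(5) by simp
  have u: "C$1$0 = 0" "C$2$0 = 0" "C$2$1 = 0" using assms(1) upper_tri_def by auto
  have mv: "(C *v v)$i = C$i$0 * v$0 + C$i$1 * v$1 + C$i$2 * v$2" for i
    by (simp add: matrix_vector_mult_def sum3)
  have "v$2 = c * v$2" using e[of 2] mv[of 2] u assms(4) by simp
  then have "(1 - c) * v$2 = 0" by (simp add: algebra_simps)
  then have v2: "v$2 = 0" using c by simp
  have "v$1 = c * v$1" using e[of 1] mv[of 1] u assms(3) v2 by simp
  then have "(1 - c) * v$1 = 0" by (simp add: algebra_simps)
  then have v1: "v$1 = 0" using c by simp
  have "v$0 = c * v$0" using e[of 0] mv[of 0] u assms(2) v2 v1 by simp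
  then have "(1 - c) * v$0 = 0" by (simp add: algebra_simps)
  then have v0: "v$0 = 0" using c by simp
  have "v = 0" using v0 v1 v2 by (simp add: vec_eq_iff all3)
  then show False using assms(6) by simp
qed

lemma diag_axis: assumes "\<forall>i j. i \<noteq> j \<longrightarrow> (D::cmat)$i$j = 0"
  shows "D *v axis i 1 = D$i$i *s axis i 1"
proof -
  have i3: "i = 0 \<or> i = 1 \<or> i = 2" using UNIV3 by auto
  have "(D *v axis i 1)$j = (D$i$i *s axis i 1)$j" for j
  proof -
    have j3: "j = 0 \<or> j = 1 \<or> j = 2" using UNIV3 by auto
    have "(D *v axis i 1)$j = D$j$0 * axis i 1 $ 0 + D$j$1 * axis i 1 $ 1 + D$j$2 * axis i 1 $ 2"
      by (simp add: matrix_vector_mult_def sum3)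
    then show ?thesis using i3 j3 assms by (auto simp: axis_def)
  qed
  then show ?thesis by (simp add: vec_eq_iff)
qed

lemma mv_scale: "(A::cmat) *v (c *s x) = c *s (A *v x)"
  by (simp add: vec_eq_iff matrix_vector_mult_def sum_distrib_left mult_ac)

lemma unip_parabolic:
  assumes "upper_tri C" "C$0$0 = 1" "C$1$1 = 1" "C$2$2 = 1" "C \<noteq> mat 1"
  shows "parabolic C"
proof -
  have nd: "\<not> diagonalizable3 C"
  proof
    assume "diagonalizable3 C"
    then obtain P D :: cmat where PD: "invertible P" "\<forall>i j. i \<noteq> j \<longrightarrow> D$i$j = 0" "C = P ** D ** matrix_inv P"
      unfolding diagonalizable3_def by blast
    note pi = inv_props[OF PD(1)]
    have "C ** P = (P ** D) ** (matrix_inv P ** P)" using PD(3) by (simp only: matrix_mul_assoc)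
    then have CP: "C ** P = P ** D" using pi by simp
    have "D$i$i = 1" for i
    proof -
      define v where "v = P *v axis i 1"
      have "C *v v = (P ** D) *v axis i 1" unfolding v_def by (simp add: matrix_vector_mul_assoc CP)
      also have "\<dots> = P *v (D *v axis i 1)" by (simp add: matrix_vector_mul_assoc)
      also have "\<dots> = D$i$i *s v" unfolding v_def diag_axis[OF PD(2)] mv_scale ..
      finally have ev: "C *v v = D$i$i *s v" .
      have "v \<noteq> 0"
      proof
        assume "v = 0"
        then have "matrix_inv P *v v = 0" by simp
        then have "axis i 1 = (0::cvec)" unfolding v_def matrix_vector_mul_assoc pi by simp
        then show False by (simp add: axis_eq_0_iff)
      qed
      then show ?thesis using unip_eig[OF assms(1-4) ev] by simp
    qed
    then have "D = mat 1" using PD(2) by (simp add: vec_eq_iff mat_def)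
    then have "C = mat 1" using PD(3) pi by simp
    then show False using assms(5) by simp
  qed
  have ev: "norm c = 1" if "eigenvalue3 (mat 1 ** C) c" for c
  proof -
    have "\<exists>v. v \<noteq> 0 \<and> (mat 1 ** C) *v v = c *s v" using that unfolding eigenvalue3_def .
    then obtain v :: cvec where "v \<noteq> 0" "C *v v = c *s v" by auto
    then have "c = 1" using unip_eig[OF assms(1-4)] by blast
    then show ?thesis by simp
  qed
  have "(1::complex)^3 = 1 \<and> \<not> diagonalizable3 (mat 1 ** C) \<and>
     (\<forall>c. eigenvalue3 (mat 1 ** C) c \<longrightarrow> norm c = 1)" using nd ev by simp
  then show ?thesis unfolding parabolic_def by blast
qed

lemma mm2: "mat a ** (X::cmat) ** (mat b ** (Y::cmat)) = mat (a*b) ** (X ** Y)"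
proof -
  have "mat a ** X ** (mat b ** Y) = mat a ** (X ** (mat b ** Y))" by (simp only: matrix_mul_assoc)
  also have "\<dots> = mat a ** (mat b ** (X ** Y))" by (simp only: mat_pull[of X b Y])
  also have "\<dots> = mat (a*b) ** (X ** Y)" by (rule mat_mult_left)
  finally show ?thesis .
qed

lemma diag1: assumes "a' * a = (1::complex)" "b' * b = 1" shows "a * b * a' * b' = 1"
proof -
  have "a * b * a' * b' = (a' * a) * (b' * b)" by (simp add: ac_simps)
  then show ?thesis using assms by simp
qed

lemma nontriv:
  assumes G: "psl_subgroup G" and U: "in_Uplus G" and NC: "noncommutative_psl G"
  shows "\<exists>C\<in>parabolic_subgroup G. C \<notin> centre3"
proof -
  have GS: "G \<subseteq> SL3" and GC: "centre3 \<subseteq> G" and Gm: "\<And>A B. A \<in> G \<Longrightarrow> B \<in> G \<Longrightarrow> A ** B \<in> G"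
    and Gi: "\<And>A. A \<in> G \<Longrightarrow> matrix_inv A \<in> G" using G unfolding psl_subgroup_def by auto
  obtain A B where AB: "A \<in> G" "B \<in> G" "\<And>w. w^3 = 1 \<Longrightarrow> A ** B \<noteq> mat w ** (B ** A)"
    using NC unfolding noncommutative_psl_def by blast
  obtain w1 where w1: "w1^3 = 1" "upper_tri (mat w1 ** A)" using U AB(1) unfolding in_Uplus_def by blast
  obtain w2 where w2: "w2^3 = 1" "upper_tri (mat w2 ** B)" using U AB(2) unfolding in_Uplus_def by blast
  define A1 where "A1 = mat w1 ** A"
  define B1 where "B1 = mat w2 ** B"
  have "mat w1 \<in> G" "mat w2 \<in> G" using GC w1 w2 unfolding centre3_def by auto
  then have A1G: "A1 \<in> G" and B1G: "B1 \<in> G" using AB Gm A1_def B1_def by auto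
  have dA: "det A1 = 1" and dB: "det B1 = 1" using A1G B1G GS unfolding SL3_def by auto
  have iA: "invertible A1" and iB: "invertible B1" using dA dB by (simp_all add: invertible_det_nz)
  note pA = inv_props[OF iA] and pB = inv_props[OF iB]
  have w0: "w1 \<noteq> 0" "w2 \<noteq> 0" using w1 w2 by auto
  have nc1: "A1 ** B1 \<noteq> mat w ** (B1 ** A1)" if w: "w^3 = 1" for w
  proof
    assume eq: "A1 ** B1 = mat w ** (B1 ** A1)"
    have "A1 ** B1 = mat (w1*w2) ** (A ** B)" unfolding A1_def B1_def by (rule mm2)
    moreover have "B1 ** A1 = mat (w2*w1) ** (B ** A)" unfolding A1_def B1_def by (rule mm2)
    ultimately have "mat (w1*w2) ** (A ** B) = mat w ** (mat (w2*w1) ** (B ** A))" using eq by simp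
    then have "mat (1/(w1*w2)) ** (mat (w1*w2) ** (A ** B)) = mat (1/(w1*w2)) ** (mat w ** (mat (w2*w1) ** (B ** A)))"
      by simp
    then have "mat (1/(w1*w2) * (w1*w2)) ** (A ** B) = mat (1/(w1*w2) * (w * (w2*w1))) ** (B ** A)"
      by (simp only: mat_mult_left)
    moreover have "1/(w1*w2) * (w1*w2) = 1" "1/(w1*w2) * (w * (w2*w1)) = w" using w0 by (simp_all add: field_simps)
    ultimately have "A ** B = mat w ** (B ** A)" by simp
    then show False using AB(3)[OF w] by simp
  qed
  define C where "C = A1 ** B1 ** matrix_inv A1 ** matrix_inv B1"
  have CG: "C \<in> G" unfolding C_def using A1G B1G Gm Gi by auto
  have Cnc: "C \<notin> centre3"
  proof
    assume "C \<in> centre3"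
    then obtain w where w: "C = mat w" "w^3 = 1" unfolding centre3_def by auto
    have "C ** (B1 ** A1) = A1 ** B1 ** matrix_inv A1 ** (matrix_inv B1 ** B1) ** A1"
      unfolding C_def by (simp only: matrix_mul_assoc)
    also have "\<dots> = A1 ** B1 ** (matrix_inv A1 ** A1)"
      by (simp only: pB(2) matrix_mul_rid matrix_mul_assoc)
    also have "\<dots> = A1 ** B1" using pA by simp
    finally have "A1 ** B1 = mat w ** (B1 ** A1)" using w by simp
    then show False using nc1[OF w(2)] by simp
  qed
  have tA: "upper_tri A1" and tB: "upper_tri B1" using w1 w2 A1_def B1_def by auto
  note tiA = tri_inv[OF tA dA] and tiB = tri_inv[OF tB dB]
  note m1 = tri_mult[OF tA tB]
  note m2 = tri_mult[OF conjunct1[OF m1] conjunct1[OF tiA]]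
  note m3 = tri_mult[OF conjunct1[OF m2] conjunct1[OF tiB]]
  have Ct: "upper_tri C" using conjunct1[OF m3] unfolding C_def .
  have C0: "C$0$0 = 1"
  proof -
    have "C$0$0 = A1$0$0 * B1$0$0 * matrix_inv A1$0$0 * matrix_inv B1$0$0"
      unfolding C_def using m1 m2 m3 by (simp only:)
    then show ?thesis using diag1 tiA tiB by (simp only:)
  qed
  have C1: "C$1$1 = 1"
  proof -
    have "C$1$1 = A1$1$1 * B1$1$1 * matrix_inv A1$1$1 * matrix_inv B1$1$1"
      unfolding C_def using m1 m2 m3 by (simp only:)
    then show ?thesis using diag1 tiA tiB by (simp only:)
  qed
  have C2: "C$2$2 = 1"
  proof -
    have "C$2$2 = A1$2$2 * B1$2$2 * matrix_inv A1$2$2 * matrix_inv B1$2$2"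
      unfolding C_def using m1 m2 m3 by (simp only:)
    then show ?thesis using diag1 tiA tiB by (simp only:)
  qed
  have "C \<noteq> mat 1" using Cnc one_centre by auto
  then have "parabolic C" using unip_parabolic[OF Ct C0 C1 C2] by simp
  then have "C \<in> parabolic_subgroup G" unfolding parabolic_subgroup_def using CG by (auto intro: psl_gen.gen)
  then show ?thesis using Cnc by blast
qed

lemma GW_zero: "Gamma_W {0} = centre3"
proof (intro set_eqI iffI)
  fix x assume "x \<in> Gamma_W {0}"
  then obtain w where "x = mat w ** gp 0" "w^3 = 1" unfolding Gamma_W_gp by auto
  then show "x \<in> centre3" unfolding centre3_def gp_0 by auto
next
  fix x assume "x \<in> centre3"
  then obtain w where w: "x = mat w" "w^3 = 1" unfolding centre3_def by auto
  then have "x = mat w ** gp 0" by (simp add: gp_0)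
  then show "x \<in> Gamma_W {0}" unfolding Gamma_W_gp using w(2) by blast
qed

lemma conj_centre: "P \<in> SL3 \<Longrightarrow> (\<lambda>A. P ** A ** matrix_inv P) ` centre3 = centre3"
proof -
  assume P: "P \<in> SL3"
  have "P ** mat w ** matrix_inv P = mat w" for w
  proof -
    have "P ** mat w ** matrix_inv P = mat w ** (P ** matrix_inv P)"
      by (simp only: matrix_mul_assoc mat_comm[of w P, symmetric])
    then show ?thesis using inv_props[OF SL3_inv[OF P]] by simp
  qed
  note c = this
  show ?thesis
  proof (intro set_eqI iffI)
    fix x assume "x \<in> (\<lambda>A. P ** A ** matrix_inv P) ` centre3"
    then obtain w where "x = P ** mat w ** matrix_inv P" "w^3 = 1" unfolding centre3_def by auto
    then show "x \<in> centre3" unfolding centre3_def c by auto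
  next
    fix x assume "x \<in> centre3"
    then obtain w where w: "x = mat w" "w^3 = 1" unfolding centre3_def by auto
    then have "x = P ** mat w ** matrix_inv P" using c by simp
    moreover have "mat w \<in> centre3" using w(2) unfolding centre3_def by auto
    ultimately show "x \<in> (\<lambda>A. P ** A ** matrix_inv P) ` centre3" by blast
  qed
qed

lemma lin_10: "lin a d (1,0) = a" by (simp add: lin_def)
lemma lin_01: "lin a d (0,1) = d" by (simp add: lin_def)
lemma lin_z0: "lin a d (z,0) = (z * fst a, z * snd a)" by (simp add: lin_def)

lemma complete_basis: assumes "(c::complex\<times>complex) \<noteq> 0"
  shows "\<exists>d. fst c * snd d - snd c * fst d \<noteq> 0"
proof (cases "fst c = 0")
  case True
  then have "snd c \<noteq> 0" using assms by (cases c) (auto simp: zero_prod_def)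
  then show ?thesis using True by (intro exI[of _ "(1,0)"]) simp
next
  case False
  then show ?thesis by (intro exI[of _ "(0,1)"]) simp
qed

lemma to_std:
  assumes "conjugate_psl H (Gamma_W W)" "fst a * snd d - snd a * fst d \<noteq> 0"
    "W = lat (lin a d e) (lin a d f)"
  shows "conjugate_psl H (psl_gen {gp e, gp f})"
proof -
  obtain Q where Q: "Q \<in> SL3" "\<forall>u. Q ** gp u ** matrix_inv Q = gp (lin a d u)"
    using exists_Q[OF assms(2)] by blast
  have "lin a d ` lat e f = W" using assms(3) lin_lat by simp
  then have "conjugate_psl H (Gamma_W (lat e f))" using conj_trans[OF assms(1) Q] by blast
  then show ?thesis using gen_eq by simp
qed

lemma lat_cyc: "lat c c = {of_int k *\<^sub>R c | k. True}"
proof (intro set_eqI iffI)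
  fix x assume "x \<in> lat c c"
  then obtain m n where "x = of_int m *\<^sub>R c + of_int n *\<^sub>R c" unfolding lat_def by auto
  then have "x = of_int (m + n) *\<^sub>R c" by (simp add: scaleR_left_distrib)
  then show "x \<in> {of_int k *\<^sub>R c | k. True}" by blast
next
  fix x assume "x \<in> {of_int k *\<^sub>R c | k. True}"
  then obtain k where "x = of_int k *\<^sub>R c" by auto
  then have "x = of_int k *\<^sub>R c + of_int 0 *\<^sub>R c" by simp
  then show "x \<in> lat c c" unfolding lat_def by blast
qed

lemma lat_0: "lat 0 c = {of_int k *\<^sub>R c | k. True}"
proof (intro set_eqI iffI)
  fix x assume "x \<in> lat 0 c"
  then obtain m n where "x = of_int m *\<^sub>R (0::complex\<times>complex) + of_int n *\<^sub>R c" unfolding lat_def by auto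
  then have "x = of_int n *\<^sub>R c" by simp
  then show "x \<in> {of_int k *\<^sub>R c | k. True}" by blast
next
  fix x assume "x \<in> {of_int k *\<^sub>R c | k. True}"
  then obtain k where "x = of_int k *\<^sub>R c" by auto
  then have "x = of_int 0 *\<^sub>R (0::complex\<times>complex) + of_int k *\<^sub>R c" by simp
  then show "x \<in> lat 0 c" unfolding lat_def by blast
qed

lemma cyc_case:
  assumes "conjugate_psl H (Gamma_W {of_int k *\<^sub>R c | k. True})" "c \<noteq> 0"
  shows "conjugate_psl H (psl_gen {gxy 1 0})"
proof -
  obtain d where d: "fst c * snd d - snd c * fst d \<noteq> 0" using complete_basis[OF assms(2)] by blast
  have "{of_int k *\<^sub>R c | k. True} = lat (lin c d (1,0)) (lin c d (1,0))" by (simp add: lin_10 lat_cyc)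
  then have "conjugate_psl H (psl_gen {gp (1,0), gp (1,0)})" using to_std[OF assms(1) d] by blast
  then show ?thesis by (simp add: gp_def)
qed

lemma real_dep_lat:
  "lat a (t *\<^sub>R a) = (\<lambda>r. r *\<^sub>R a) ` {of_int m + of_int n * t | m n :: int. True}"
proof (intro set_eqI iffI)
  fix x assume "x \<in> lat a (t *\<^sub>R a)"
  then obtain m n where "x = of_int m *\<^sub>R a + of_int n *\<^sub>R (t *\<^sub>R a)" unfolding lat_def by auto
  then have "x = (of_int m + of_int n * t) *\<^sub>R a" by (simp add: scaleR_left_distrib)
  then show "x \<in> (\<lambda>r. r *\<^sub>R a) ` {of_int m + of_int n * t | m n :: int. True}" by blast
next
  fix x assume "x \<in> (\<lambda>r. r *\<^sub>R a) ` {of_int m + of_int n * t | m n :: int. True}"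
  then obtain m n where "x = (of_int m + of_int n * t) *\<^sub>R a" by auto
  then have "x = of_int m *\<^sub>R a + of_int n *\<^sub>R (t *\<^sub>R a)" by (simp add: scaleR_left_distrib)
  then show "x \<in> lat a (t *\<^sub>R a)" unfolding lat_def by blast
qed

lemma real_dep_case:
  assumes W: "discrete_add_subgroup (lat a (t *\<^sub>R a))" and a: "a \<noteq> 0"
  shows "\<exists>c. c \<noteq> 0 \<and> lat a (t *\<^sub>R a) = {of_int k *\<^sub>R c | k. True}"
proof -
  define S where "S = {of_int m + of_int n * t | m n :: int. True}"
  have LS: "lat a (t *\<^sub>R a) = (\<lambda>r. r *\<^sub>R a) ` S" unfolding S_def by (rule real_dep_lat)
  have "0 \<in> lat a (t *\<^sub>R a)" using W unfolding discrete_add_subgroup_def by blast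
  then obtain e where e: "e > 0" "\<forall>w\<in>lat a (t *\<^sub>R a). dist w 0 < e \<longrightarrow> w = 0"
    using W unfolding discrete_add_subgroup_def by blast
  have na: "norm a > 0" using a by simp
  have S0: "0 \<in> S" unfolding S_def by (rule CollectI, rule exI[of _ 0], rule exI[of _ 0]) simp
  have S1: "1 \<in> S" unfolding S_def by (rule CollectI, rule exI[of _ 1], rule exI[of _ 0]) simp
  have Sd: "\<forall>x\<in>S. \<forall>y\<in>S. x - y \<in> S"
  proof (intro ballI)
    fix x y assume "x \<in> S" "y \<in> S"
    then obtain m n m' n' where "x = of_int m + of_int n * t" "y = of_int m' + of_int n' * t"
      unfolding S_def by auto
    then have "x - y = of_int (m - m') + of_int (n - n') * t" by (simp add: algebra_simps)
    then show "x - y \<in> S" unfolding S_def by blast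
  qed
  have sep: "\<forall>x\<in>S. x \<noteq> 0 \<longrightarrow> e / norm a \<le> \<bar>x\<bar>"
  proof (intro ballI impI)
    fix x assume x: "x \<in> S" "x \<noteq> 0"
    have "x *\<^sub>R a \<in> lat a (t *\<^sub>R a)" using LS x by blast
    moreover have "x *\<^sub>R a \<noteq> 0" using x a by simp
    ultimately have "\<not> dist (x *\<^sub>R a) 0 < e" using e by blast
    then have "e \<le> \<bar>x\<bar> * norm a" by simp
    then show "e / norm a \<le> \<bar>x\<bar>" using na by (simp add: divide_le_eq)
  qed
  obtain s where s: "s \<noteq> 0" "S = {of_int k * s | k. True}"
    using real_cyclic[OF S0 Sd _ sep S1] e na by auto
  have "lat a (t *\<^sub>R a) = {of_int k *\<^sub>R (s *\<^sub>R a) | k. True}"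
    unfolding LS s(2) by auto
  moreover have "s *\<^sub>R a \<noteq> 0" using s a by simp
  ultimately show ?thesis by blast
qed

theorem mainTheorem5:
  fixes G :: "cmat set"
  assumes "complex_kleinian G"
    and "in_Uplus G"
    and "noncommutative_psl G"
    and "torsion_free_psl G"
    and "\<exists>W. discrete_add_subgroup W \<and> rank_le_2 W \<and>
           conjugate_psl (parabolic_subgroup G) (Gamma_W W)"
  shows "conjugate_psl (parabolic_subgroup G) (psl_gen {gxy 1 0, gxy 0 1})
       \<or> (\<exists>y. y \<notin> \<real> \<and> conjugate_psl (parabolic_subgroup G) (psl_gen {gxy 0 1, gxy 0 y}))
       \<or> (\<exists>x. x \<notin> \<real> \<and> conjugate_psl (parabolic_subgroup G) (psl_gen {gxy 1 0, gxy x 0}))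
       \<or> conjugate_psl (parabolic_subgroup G) (psl_gen {gxy 1 0})
       \<or> conjugate_psl (parabolic_subgroup G) (psl_gen {gxy 0 1})"
proof -
  let ?H = "parabolic_subgroup G"
  have G: "psl_subgroup G" using assms(1) unfolding complex_kleinian_def by blast
  obtain C where C: "C \<in> ?H" "C \<notin> centre3" using nontriv[OF G assms(2) assms(3)] by blast
  obtain W where W: "discrete_add_subgroup W" "rank_le_2 W" "conjugate_psl ?H (Gamma_W W)"
    using assms(5) by blast
  obtain a b where Wab: "W = lat a b" using W(2) unfolding rank_le_2_def lat_def by blast
  have nz: "W \<noteq> {0}"
  proof
    assume "W = {0}"
    then obtain P where P: "P \<in> SL3" "?H = (\<lambda>A. P ** A ** matrix_inv P) ` centre3"
      using W(3) GW_zero unfolding conjugate_psl_def by auto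
    then have "?H = centre3" using conj_centre by simp
    then show False using C by simp
  qed
  have cyc: "conjugate_psl ?H (psl_gen {gxy 1 0})" if cW: "W = {of_int k *\<^sub>R c | k. True}" for c
  proof -
    have "c \<noteq> 0"
    proof
      assume "c = 0"
      then have "W = {0}" using cW by auto
      then show False using nz by simp
    qed
    then show ?thesis using cyc_case W(3) cW by blast
  qed
  show ?thesis
  proof (cases "fst a * snd b - snd a * fst b = 0")
    case False
    have "W = lat (lin a b (1,0)) (lin a b (0,1))" using Wab by (simp add: lin_10 lin_01)
    then have "conjugate_psl ?H (psl_gen {gp (1,0), gp (0,1)})" using to_std[OF W(3) False] by blast
    then show ?thesis by (simp add: gp_def)
  next
    case dl: True
    show ?thesis
    proof (cases "a = 0")
      case True
      then have "W = {of_int k *\<^sub>R b | k. True}" using Wab lat_0 by simp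
      then show ?thesis using cyc by blast
    next
      case a0: False
      obtain z where z: "b = (z * fst a, z * snd a)"
      proof (cases "fst a = 0")
        case True
        then have sa: "snd a \<noteq> 0" using a0 by (cases a) (auto simp: zero_prod_def)
        have "fst b = 0" using dl True sa by simp
        then have "b = (snd b / snd a * fst a, snd b / snd a * snd a)" using True sa by (cases b) simp
        then show ?thesis using that by blast
      next
        case False
        have "snd b = fst b / fst a * snd a" using dl False by (simp add: field_simps)
        then have "b = (fst b / fst a * fst a, fst b / fst a * snd a)" using False by (cases b) simp
        then show ?thesis using that by blast
      qed
      obtain d where d: "fst a * snd d - snd a * fst d \<noteq> 0" using complete_basis[OF a0] by blast
      show ?thesis
      proof (cases "z \<in> \<real>")
        case False
        have "W = lat (lin a d (1,0)) (lin a d (z,0))" using Wab z by (simp add: lin_10 lin_z0)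
        then have "conjugate_psl ?H (psl_gen {gp (1,0), gp (z,0)})" using to_std[OF W(3) d] by blast
        then have "conjugate_psl ?H (psl_gen {gxy 1 0, gxy z 0})" by (simp add: gp_def)
        then show ?thesis using False by blast
      next
        case True
        then obtain t where t: "z = of_real t" using Reals_cases by blast
        have "b = t *\<^sub>R a" using z t by (cases a) (simp add: scaleR_conv_of_real)
        then have "W = lat a (t *\<^sub>R a)" using Wab by simp
        then obtain c where "c \<noteq> 0" "W = {of_int k *\<^sub>R c | k. True}"
          using real_dep_case W(1) a0 by metis
        then show ?thesis using cyc by blast
      qed
    qed
  qed
qed

end
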